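(* Let $A$ be an infinite set, $(x_n^* )_{ n \in \mathbb{N} }$ a sequence in $[-1,1]^A$ and $(f_n)_{ n \in \mathbb{N} }$ a sequence in $FBL(A)$ such that: (1) $f_n \geq 0$ for every $n$; (2) $f_n(x_n^* )=1$ for every $n$; (3) for every finite set $F\subseteq A$ there is $n\in\mathbb{N}$ with $x_n^*|_F=0$. Then for every $\varepsilon>0$ there is a subsequence $(f_{n_k})_{ k \in \mathbb{N} }$ such that $\big\| \sum_{k=1}^{m} f_{n_k} \big\| \geq m - \varepsilon$ for every $m\in \mathbb{N}$.
   Context: For a nonempty set $A$ and $x\in A$, $\delta_x:[-1,1]^A\to[-1,1]$ is $\delta_x(x^* )=x^*(x)$. For $f:[-1,1]^A\to\mathbb{R}$, $$\|f\| = \sup \Big\{\sum_{i = 1}^n | f(x_{i}^{\ast})| : n \in \mathbb{N},\ x_1^{\ast}, \ldots, x_n^{\ast} \in [-1,1]^A,\ \sup_{x \in A} \sum_{i=1}^n |x_i^{\ast}(x)| \leq 1 \Big\}.$$ $FBL(A)$ is the Banach lattice generated by the functions $\delta_x$ ($x\in A$) inside the Banach lattice of all functions $[-1,1]^A\to\mathbb{R}$ with finite norm (pointwise operations and order), equipped with this norm. $[-1,1]^A$ carries the product topology. *)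

theory Defs
  imports "HOL-Analysis.Analysis"
begin

definition cube :: "'a set \<Rightarrow> ('a \<Rightarrow> real) set" where
  "cube A = PiE A (\<lambda>_. {-1..1})"

text \<open>Functions [-1,1]^A to R are represented as functions vanishing off the cube.\<close>
definition delta :: "'a set \<Rightarrow> 'a \<Rightarrow> ('a \<Rightarrow> real) \<Rightarrow> real" where
  "delta A x = (\<lambda>xs. if xs \<in> cube A then xs x else 0)"

definition fbl_norm_set :: "'a set \<Rightarrow> (('a \<Rightarrow> real) \<Rightarrow> real) \<Rightarrow> real set" where
  "fbl_norm_set A f = {(\<Sum>i<n. \<bar>f (xs i)\<bar>) | (n::nat) xs.
      (\<forall>i<n. xs i \<in> cube A) \<and> (\<forall>a\<in>A. (\<Sum>i<n. \<bar>xs i a\<bar>) \<le> 1)}"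

definition fbl_norm :: "'a set \<Rightarrow> (('a \<Rightarrow> real) \<Rightarrow> real) \<Rightarrow> real" where
  "fbl_norm A f = Sup (fbl_norm_set A f)"

definition fin_norm_space :: "'a set \<Rightarrow> (('a \<Rightarrow> real) \<Rightarrow> real) set" where
  "fin_norm_space A = {f. (\<forall>xs. xs \<notin> cube A \<longrightarrow> f xs = 0) \<and> bdd_above (fbl_norm_set A f)}"

text \<open>FBL(A): the smallest closed vector sublattice of H containing all delta functions.\<close>
definition FBL :: "'a set \<Rightarrow> (('a \<Rightarrow> real) \<Rightarrow> real) set" where
  "FBL A = \<Inter> {S. S \<subseteq> fin_norm_space A
     \<and> (\<forall>x\<in>A. delta A x \<in> S)
     \<and> (\<lambda>t. 0) \<in> S
     \<and> (\<forall>f\<in>S. \<forall>g\<in>S. (\<lambda>t. f t + g t) \<in> S)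
     \<and> (\<forall>c::real. \<forall>f\<in>S. (\<lambda>t. c * f t) \<in> S)
     \<and> (\<forall>f\<in>S. \<forall>g\<in>S. (\<lambda>t. max (f t) (g t)) \<in> S)
     \<and> (\<forall>g h. (\<forall>n::nat. g n \<in> S) \<and> h \<in> fin_norm_space A
              \<and> (\<lambda>n. fbl_norm A (\<lambda>t. g n t - h t)) \<longlonglongrightarrow> 0 \<longrightarrow> h \<in> S)}"

end

theory Submission
  imports Defs
begin

definition restr :: "'a set \<Rightarrow> 'a set \<Rightarrow> ('a \<Rightarrow> real) \<Rightarrow> ('a \<Rightarrow> real)" where
  "restr A G t = (\<lambda>a. if a \<in> A \<and> a \<notin> G then 0 else t a)"

definition z0 :: "'a set \<Rightarrow> ('a \<Rightarrow> real)" where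
  "z0 A = (\<lambda>a. if a \<in> A then 0 else undefined)"

definition approx :: "'a set \<Rightarrow> (('a \<Rightarrow> real) \<Rightarrow> real) \<Rightarrow> bool" where
  "approx A f = (\<forall>e>0. \<exists>F. finite F \<and> F \<subseteq> A \<and>
     (\<forall>G. F \<subseteq> G \<and> G \<subseteq> A \<longrightarrow> (\<forall>t\<in>cube A. \<bar>f t - f (restr A G t)\<bar> \<le> e)))"

lemma max_lip: "\<bar>a - a'\<bar> \<le> e \<Longrightarrow> \<bar>b - b'\<bar> \<le> e \<Longrightarrow> \<bar>max a b - max a' b'\<bar> \<le> (e::real)"
  by (simp add: max_def abs_le_iff)

lemma cube_restr: "t \<in> cube A \<Longrightarrow> G \<subseteq> A \<Longrightarrow> restr A G t \<in> cube A"
  unfolding cube_def restr_def by (auto simp: PiE_iff extensional_def)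

lemma zero_cube: "z0 A \<in> cube A"
  unfolding cube_def z0_def by (auto simp: PiE_iff extensional_def)

lemma cube_le1: "t \<in> cube A \<Longrightarrow> a \<in> A \<Longrightarrow> \<bar>t a\<bar> \<le> 1"
  unfolding cube_def by (auto simp: PiE_iff)

lemma fns_bound:
  assumes "f \<in> fin_norm_space A" "g \<in> fin_norm_space A"
    "\<forall>t. t \<notin> cube A \<longrightarrow> h t = 0"
    "\<forall>t\<in>cube A. \<bar>h t\<bar> \<le> c * \<bar>f t\<bar> + d * \<bar>g t\<bar>" "c \<ge> 0" "d \<ge> 0"
  shows "h \<in> fin_norm_space A"
proof -
  obtain Bf where Bf: "\<forall>z\<in>fbl_norm_set A f. z \<le> Bf"
    using assms(1) unfolding fin_norm_space_def bdd_above_def by blast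
  obtain Bg where Bg: "\<forall>z\<in>fbl_norm_set A g. z \<le> Bg"
    using assms(2) unfolding fin_norm_space_def bdd_above_def by blast
  have "bdd_above (fbl_norm_set A h)"
    unfolding bdd_above_def
  proof (intro exI ballI)
    fix z assume "z \<in> fbl_norm_set A h"
    then obtain n :: nat and xs where z: "z = (\<Sum>i<n. \<bar>h (xs i)\<bar>)" and xs: "\<forall>i<n. xs i \<in> cube A"
      and s: "\<forall>a\<in>A. (\<Sum>i<n. \<bar>xs i a\<bar>) \<le> 1"
      unfolding fbl_norm_set_def by blast
    have "(\<Sum>i<n. \<bar>f (xs i)\<bar>) \<in> fbl_norm_set A f"
      unfolding fbl_norm_set_def using xs s by blast
    hence f1: "(\<Sum>i<n. \<bar>f (xs i)\<bar>) \<le> Bf" using Bf by blast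
    have "(\<Sum>i<n. \<bar>g (xs i)\<bar>) \<in> fbl_norm_set A g"
      unfolding fbl_norm_set_def using xs s by blast
    hence g1: "(\<Sum>i<n. \<bar>g (xs i)\<bar>) \<le> Bg" using Bg by blast
    have "z \<le> (\<Sum>i<n. c * \<bar>f (xs i)\<bar> + d * \<bar>g (xs i)\<bar>)"
      unfolding z by (rule sum_mono) (use assms(4) xs in auto)
    also have "\<dots> = c * (\<Sum>i<n. \<bar>f (xs i)\<bar>) + d * (\<Sum>i<n. \<bar>g (xs i)\<bar>)"
      by (simp add: sum.distrib sum_distrib_left)
    also have "\<dots> \<le> c * Bf + d * Bg"
      using f1 g1 assms(5,6) by (simp add: add_mono mult_left_mono)
    finally show "z \<le> c * Bf + d * Bg" .
  qed
  thus ?thesis using assms(3) unfolding fin_norm_space_def by blast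
qed

lemma norm_ge_sum:
  fixes n :: nat
  assumes "f \<in> fin_norm_space A" "\<forall>i<n. xs i \<in> cube A"
    "\<forall>a\<in>A. (\<Sum>i<n. \<bar>xs i a\<bar>) \<le> 1"
  shows "(\<Sum>i<n. \<bar>f (xs i)\<bar>) \<le> fbl_norm A f"
proof -
  have "(\<Sum>i<n. \<bar>f (xs i)\<bar>) \<in> fbl_norm_set A f"
    unfolding fbl_norm_set_def using assms(2,3) by blast
  thus ?thesis unfolding fbl_norm_def
    using assms(1) unfolding fin_norm_space_def by (auto intro: cSup_upper)
qed

lemma norm_ge_point:
  assumes "f \<in> fin_norm_space A" "t \<in> cube A"
  shows "\<bar>f t\<bar> \<le> fbl_norm A f"
  using norm_ge_sum[OF assms(1), of 1 "\<lambda>_. t"] assms(2) cube_le1[OF assms(2)] by (simp add: card_lessThan)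

lemma zero_fns: "(\<lambda>t. 0) \<in> fin_norm_space A"
proof -
  have "fbl_norm_set A (\<lambda>t. 0) \<subseteq> {0}" unfolding fbl_norm_set_def by auto
  hence "bdd_above (fbl_norm_set A (\<lambda>t. 0))" by (meson bdd_above_mono bdd_above_insert bdd_above_empty)
  thus ?thesis unfolding fin_norm_space_def by simp
qed

lemma FBL_sub: "FBL A \<subseteq> {f \<in> fin_norm_space A. f (z0 A) = 0 \<and> approx A f}"
  (is "_ \<subseteq> ?S")
  unfolding FBL_def
proof (rule Inter_lower, rule CollectI, intro conjI)
  show "?S \<subseteq> fin_norm_space A" by blast
  show "\<forall>x\<in>A. delta A x \<in> ?S"
  proof
    fix x assume x: "x \<in> A"
    have "delta A x \<in> fin_norm_space A"
    proof -
      have "bdd_above (fbl_norm_set A (delta A x))"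
        unfolding bdd_above_def
      proof (intro exI ballI)
        fix z assume "z \<in> fbl_norm_set A (delta A x)"
        then obtain n :: nat and xs where z: "z = (\<Sum>i<n. \<bar>delta A x (xs i)\<bar>)" and xs: "\<forall>i<n. xs i \<in> cube A"
          and s: "\<forall>a\<in>A. (\<Sum>i<n. \<bar>xs i a\<bar>) \<le> 1"
          unfolding fbl_norm_set_def by blast
        have "z = (\<Sum>i<n. \<bar>xs i x\<bar>)" unfolding z delta_def using xs by simp
        thus "z \<le> 1" using s x by simp
      qed
      thus ?thesis unfolding fin_norm_space_def delta_def by auto
    qed
    moreover have "delta A x (z0 A) = 0" unfolding delta_def using zero_cube x by (simp add: z0_def)
    moreover have "approx A (delta A x)"
      unfolding approx_def
    proof (intro allI impI)
      fix e :: real assume "e > 0"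
      show "\<exists>F. finite F \<and> F \<subseteq> A \<and>
          (\<forall>G. F \<subseteq> G \<and> G \<subseteq> A \<longrightarrow> (\<forall>t\<in>cube A. \<bar>delta A x t - delta A x (restr A G t)\<bar> \<le> e))"
        by (rule exI[of _ "{x}"]) (use x \<open>e > 0\<close> cube_restr in \<open>auto simp: delta_def restr_def\<close>)
    qed
    ultimately show "delta A x \<in> ?S" by blast
  qed
  show "(\<lambda>t. 0) \<in> ?S"
  proof -
    have "fbl_norm_set A (\<lambda>t. 0) \<subseteq> {0}" unfolding fbl_norm_set_def by auto
    hence "bdd_above (fbl_norm_set A (\<lambda>t. 0))" by (meson bdd_above_mono bdd_above_insert bdd_above_empty)
    hence "(\<lambda>t. 0) \<in> fin_norm_space A"
      unfolding fin_norm_space_def by simp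
    moreover have "approx A (\<lambda>t. 0)" unfolding approx_def by (intro allI impI exI[of _ "{}"]) simp
    ultimately show ?thesis by simp
  qed
  have sum_ap: "approx A (\<lambda>t. f t + g t)" if af: "approx A f" and ag: "approx A g" for f g
    unfolding approx_def
  proof (intro allI impI)
    fix e :: real assume e: "e > 0"
    obtain F1 where F1: "finite F1" "F1 \<subseteq> A"
      "\<forall>G. F1 \<subseteq> G \<and> G \<subseteq> A \<longrightarrow> (\<forall>t\<in>cube A. \<bar>f t - f (restr A G t)\<bar> \<le> e/2)"
      using af e unfolding approx_def by (metis half_gt_zero)
    obtain F2 where F2: "finite F2" "F2 \<subseteq> A"
      "\<forall>G. F2 \<subseteq> G \<and> G \<subseteq> A \<longrightarrow> (\<forall>t\<in>cube A. \<bar>g t - g (restr A G t)\<bar> \<le> e/2)"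
      using ag e unfolding approx_def by (metis half_gt_zero)
    show "\<exists>F. finite F \<and> F \<subseteq> A \<and> (\<forall>G. F \<subseteq> G \<and> G \<subseteq> A \<longrightarrow>
        (\<forall>t\<in>cube A. \<bar>f t + g t - (f (restr A G t) + g (restr A G t))\<bar> \<le> e))"
    proof (rule exI[of _ "F1 \<union> F2"], intro conjI allI impI ballI)
      fix G t assume G: "F1 \<union> F2 \<subseteq> G \<and> G \<subseteq> A" and t: "t \<in> cube A"
      have "\<bar>f t - f (restr A G t)\<bar> \<le> e/2" using F1(3) G t by auto
      moreover have "\<bar>g t - g (restr A G t)\<bar> \<le> e/2" using F2(3) G t by auto
      ultimately show "\<bar>f t + g t - (f (restr A G t) + g (restr A G t))\<bar> \<le> e" by linarith
    qed (use F1 F2 in auto)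
  qed
  show "\<forall>f\<in>?S. \<forall>g\<in>?S. (\<lambda>t. f t + g t) \<in> ?S"
  proof (intro ballI)
    fix f g assume f: "f \<in> ?S" and g: "g \<in> ?S"
    have "(\<lambda>t. f t + g t) \<in> fin_norm_space A"
      by (rule fns_bound[of f A g _ 1 1]) (use f g in \<open>auto simp: fin_norm_space_def\<close>)
    thus "(\<lambda>t. f t + g t) \<in> ?S" using f g sum_ap by auto
  qed
  show "\<forall>c::real. \<forall>f\<in>?S. (\<lambda>t. c * f t) \<in> ?S"
  proof (intro allI ballI)
    fix c :: real and f assume f: "f \<in> ?S"
    have "(\<lambda>t. c * f t) \<in> fin_norm_space A"
      by (rule fns_bound[of f A f _ "\<bar>c\<bar>" 0]) (use f in \<open>auto simp: fin_norm_space_def abs_mult\<close>)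
    moreover have "approx A (\<lambda>t. c * f t)"
      unfolding approx_def
    proof (intro allI impI)
      fix e :: real assume e: "e > 0"
      have e': "e / (\<bar>c\<bar> + 1) > 0" using e by simp
      obtain F1 where F1: "finite F1" "F1 \<subseteq> A"
        "\<forall>G. F1 \<subseteq> G \<and> G \<subseteq> A \<longrightarrow> (\<forall>t\<in>cube A. \<bar>f t - f (restr A G t)\<bar> \<le> e / (\<bar>c\<bar> + 1))"
        using f e' unfolding approx_def by blast
      show "\<exists>F. finite F \<and> F \<subseteq> A \<and> (\<forall>G. F \<subseteq> G \<and> G \<subseteq> A \<longrightarrow>
          (\<forall>t\<in>cube A. \<bar>c * f t - c * f (restr A G t)\<bar> \<le> e))"
      proof (rule exI[of _ F1], intro conjI allI impI ballI)
        fix G t assume G: "F1 \<subseteq> G \<and> G \<subseteq> A" and t: "t \<in> cube A"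
        have h: "\<bar>f t - f (restr A G t)\<bar> \<le> e / (\<bar>c\<bar> + 1)" using F1(3) G t by auto
        have "\<bar>c * f t - c * f (restr A G t)\<bar> = \<bar>c\<bar> * \<bar>f t - f (restr A G t)\<bar>"
          by (simp add: abs_mult[symmetric] right_diff_distrib)
        also have "\<dots> \<le> \<bar>c\<bar> * (e / (\<bar>c\<bar> + 1))"
          using h by (intro mult_left_mono) auto
        also have "\<dots> \<le> e" using e by (simp add: field_simps)
        finally show "\<bar>c * f t - c * f (restr A G t)\<bar> \<le> e" .
      qed (use F1 in auto)
    qed
    ultimately show "(\<lambda>t. c * f t) \<in> ?S" using f by auto
  qed
  show "\<forall>f\<in>?S. \<forall>g\<in>?S. (\<lambda>t. max (f t) (g t)) \<in> ?S"
  proof (intro ballI)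
    fix f g assume f: "f \<in> ?S" and g: "g \<in> ?S"
    have "(\<lambda>t. max (f t) (g t)) \<in> fin_norm_space A"
      by (rule fns_bound[of f A g _ 1 1]) (use f g in \<open>auto simp: fin_norm_space_def\<close>)
    moreover have "approx A (\<lambda>t. max (f t) (g t))"
      unfolding approx_def
    proof (intro allI impI)
      fix e :: real assume e: "e > 0"
      obtain F1 where F1: "finite F1" "F1 \<subseteq> A"
        "\<forall>G. F1 \<subseteq> G \<and> G \<subseteq> A \<longrightarrow> (\<forall>t\<in>cube A. \<bar>f t - f (restr A G t)\<bar> \<le> e)"
        using f e unfolding approx_def by blast
      obtain F2 where F2: "finite F2" "F2 \<subseteq> A"
        "\<forall>G. F2 \<subseteq> G \<and> G \<subseteq> A \<longrightarrow> (\<forall>t\<in>cube A. \<bar>g t - g (restr A G t)\<bar> \<le> e)"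
        using g e unfolding approx_def by blast
      show "\<exists>F. finite F \<and> F \<subseteq> A \<and> (\<forall>G. F \<subseteq> G \<and> G \<subseteq> A \<longrightarrow>
          (\<forall>t\<in>cube A. \<bar>max (f t) (g t) - max (f (restr A G t)) (g (restr A G t))\<bar> \<le> e))"
      proof (rule exI[of _ "F1 \<union> F2"], intro conjI allI impI ballI)
        fix G t assume G: "F1 \<union> F2 \<subseteq> G \<and> G \<subseteq> A" and t: "t \<in> cube A"
        have "\<bar>f t - f (restr A G t)\<bar> \<le> e" using F1(3) G t by auto
        moreover have "\<bar>g t - g (restr A G t)\<bar> \<le> e" using F2(3) G t by auto
        ultimately show "\<bar>max (f t) (g t) - max (f (restr A G t)) (g (restr A G t))\<bar> \<le> e"
          by (rule max_lip)
      qed (use F1 F2 in auto)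
    qed
    ultimately show "(\<lambda>t. max (f t) (g t)) \<in> ?S" using f g by auto
  qed
  show "\<forall>g h. (\<forall>n::nat. g n \<in> ?S) \<and> h \<in> fin_norm_space A
              \<and> (\<lambda>n. fbl_norm A (\<lambda>t. g n t - h t)) \<longlonglongrightarrow> 0 \<longrightarrow> h \<in> ?S"
  proof (intro allI impI, elim conjE)
    fix g :: "nat \<Rightarrow> ('a \<Rightarrow> real) \<Rightarrow> real" and h
    assume gS: "\<forall>n. g n \<in> ?S" and h: "h \<in> fin_norm_space A"
      and lim: "(\<lambda>n. fbl_norm A (\<lambda>t. g n t - h t)) \<longlonglongrightarrow> 0"
    have dfns: "(\<lambda>t. g n t - h t) \<in> fin_norm_space A" for n
      by (rule fns_bound[of "g n" A h _ 1 1]) (use gS h in \<open>auto simp: fin_norm_space_def\<close>)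
    have pt: "\<bar>g n t - h t\<bar> \<le> fbl_norm A (\<lambda>t. g n t - h t)" if "t \<in> cube A" for n t
      using norm_ge_point[OF dfns that] by simp
    have "\<bar>h (z0 A)\<bar> \<le> 0"
    proof (rule LIMSEQ_le_const[OF lim], intro exI allI impI)
      fix n
      show "\<bar>h (z0 A)\<bar> \<le> fbl_norm A (\<lambda>t. g n t - h t)"
        using pt[OF zero_cube, of n] gS by auto
    qed
    hence h0: "h (z0 A) = 0" by simp
    have "approx A h"
      unfolding approx_def
    proof (intro allI impI)
      fix e :: real assume e: "e > 0"
      have "eventually (\<lambda>n. fbl_norm A (\<lambda>t. g n t - h t) < e/3) sequentially"
        using order_tendstoD(2)[OF lim, of "e/3"] e by simp
      then obtain n where n: "fbl_norm A (\<lambda>t. g n t - h t) < e/3"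
        unfolding eventually_sequentially by blast
      have "approx A (g n)" using gS by auto
      then obtain F1 where F1: "finite F1" "F1 \<subseteq> A"
        "\<forall>G. F1 \<subseteq> G \<and> G \<subseteq> A \<longrightarrow> (\<forall>t\<in>cube A. \<bar>g n t - g n (restr A G t)\<bar> \<le> e/3)"
        using e unfolding approx_def by (metis divide_pos_pos zero_less_numeral)
      show "\<exists>F. finite F \<and> F \<subseteq> A \<and> (\<forall>G. F \<subseteq> G \<and> G \<subseteq> A \<longrightarrow>
          (\<forall>t\<in>cube A. \<bar>h t - h (restr A G t)\<bar> \<le> e))"
      proof (rule exI[of _ F1], intro conjI allI impI ballI)
        fix G t assume G: "F1 \<subseteq> G \<and> G \<subseteq> A" and t: "t \<in> cube A"
        have "\<bar>g n t - g n (restr A G t)\<bar> \<le> e/3" using F1(3) G t by auto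
        moreover have "\<bar>g n t - h t\<bar> < e/3" using pt[OF t, of n] n by linarith
        moreover have "\<bar>g n (restr A G t) - h (restr A G t)\<bar> < e/3"
          using pt[OF cube_restr[OF t], of G n] n G by linarith
        ultimately show "\<bar>h t - h (restr A G t)\<bar> \<le> e" by linarith
      qed (use F1 in auto)
    qed
    thus "h \<in> ?S" using h h0 by auto
  qed
qed

theorem mainTheorem5:
  fixes A :: "'a set"
    and x :: "nat \<Rightarrow> 'a \<Rightarrow> real"
    and f :: "nat \<Rightarrow> ('a \<Rightarrow> real) \<Rightarrow> real"
  assumes "infinite A"
    and "\<And>n. x n \<in> cube A"
    and "\<And>n. f n \<in> FBL A"
    and "\<And>n t. t \<in> cube A \<Longrightarrow> f n t \<ge> 0"
    and "\<And>n. f n (x n) = 1"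
    and "\<And>F. finite F \<Longrightarrow> F \<subseteq> A \<Longrightarrow> \<exists>n. \<forall>a\<in>F. x n a = 0"
  shows "\<forall>\<epsilon>>0. \<exists>r. strict_mono r \<and>
           (\<forall>m. fbl_norm A (\<lambda>t. \<Sum>k<m. f (r k) t) \<ge> real m - \<epsilon>)"
proof (intro allI impI)
  fix \<epsilon> :: real assume ep: "\<epsilon> > 0"
  have S: "f n \<in> fin_norm_space A \<and> f n (z0 A) = 0 \<and> approx A (f n)" for n
    using FBL_sub assms(3)[of n] by blast
  have nz: "\<exists>a\<in>A. x j a \<noteq> 0" for j
  proof (rule ccontr)
    assume "\<not> (\<exists>a\<in>A. x j a \<noteq> 0)"
    hence "\<forall>a\<in>A. x j a = 0" by auto
    hence "x j = z0 A" using assms(2)[of j] unfolding cube_def z0_def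
      by (intro ext) (auto simp: PiE_iff extensional_def)
    thus False using S[of j] assms(5)[of j] by simp
  qed
  then obtain pick where pick: "\<forall>j. pick j \<in> A \<and> x j (pick j) \<noteq> 0" by metis
  have big: "\<exists>n\<ge>N. \<forall>a\<in>U. x n a = 0" if "finite U" "U \<subseteq> A" for N U
  proof -
    have "finite (U \<union> pick ` {..<N})" "U \<union> pick ` {..<N} \<subseteq> A" using that pick by auto
    then obtain n where n: "\<forall>a\<in>U \<union> pick ` {..<N}. x n a = 0" using assms(6) by blast
    have "n \<ge> N"
    proof (rule ccontr)
      assume "\<not> n \<ge> N" hence "pick n \<in> pick ` {..<N}" by auto
      thus False using n pick by auto
    qed
    thus ?thesis using n by auto
  qed
  have "\<forall>N U. \<exists>n. finite U \<and> U \<subseteq> A \<longrightarrow> n \<ge> N \<and> (\<forall>a\<in>U. x n a = 0)"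
    using big by blast
  then obtain nx where nx: "\<forall>N U. finite U \<and> U \<subseteq> A \<longrightarrow> nx N U \<ge> N \<and> (\<forall>a\<in>U. x (nx N U) a = 0)"
    by metis
  have "\<forall>n e. \<exists>F. e > 0 \<longrightarrow> finite F \<and> F \<subseteq> A \<and> \<bar>f n (x n) - f n (restr A F (x n))\<bar> \<le> e"
  proof (intro allI)
    fix n and e :: real
    show "\<exists>F. e > 0 \<longrightarrow> finite F \<and> F \<subseteq> A \<and> \<bar>f n (x n) - f n (restr A F (x n))\<bar> \<le> e"
    proof (cases "e > 0")
      case True
      then obtain F where F: "finite F" "F \<subseteq> A"
        "\<forall>G. F \<subseteq> G \<and> G \<subseteq> A \<longrightarrow> (\<forall>t\<in>cube A. \<bar>f n t - f n (restr A G t)\<bar> \<le> e)"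
        using S[of n] unfolding approx_def by blast
      thus ?thesis using assms(2)[of n] by blast
    qed auto
  qed
  then obtain Fc where Fc: "\<forall>n e. e > 0 \<longrightarrow> finite (Fc n e) \<and> Fc n e \<subseteq> A \<and>
      \<bar>f n (x n) - f n (restr A (Fc n e) (x n))\<bar> \<le> e"
    by metis
  define e where "e = (\<lambda>k::nat. \<epsilon> / 2 ^ Suc k)"
  have epos: "e k > 0" for k using ep unfolding e_def by simp
  define st where "st = rec_nat (0::nat, {}::'a set)
     (\<lambda>k s. (nx (fst s) (snd s) + 1, snd s \<union> Fc (nx (fst s) (snd s)) (e k)))"
  define r where "r k = nx (fst (st k)) (snd (st k))" for k
  define FF where "FF k = Fc (r k) (e k)" for k
  have st0: "st 0 = (0, {})" by (simp add: st_def)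
  have stS: "st (Suc k) = (r k + 1, snd (st k) \<union> FF k)" for k
    by (simp add: st_def r_def FF_def)
  have FFp: "finite (FF k) \<and> FF k \<subseteq> A \<and>
      \<bar>f (r k) (x (r k)) - f (r k) (restr A (FF k) (x (r k)))\<bar> \<le> e k" for k
    using Fc epos unfolding FF_def by blast
  have inv: "snd (st k) = (\<Union>j<k. FF j)" for k
    by (induction k) (auto simp: st0 stS lessThan_Suc)
  have U: "finite (snd (st k)) \<and> snd (st k) \<subseteq> A" for k
    using FFp unfolding inv by auto
  have rprop: "r k \<ge> fst (st k) \<and> (\<forall>a\<in>snd (st k). x (r k) a = 0)" for k
    using nx U unfolding r_def by blast
  have mono: "strict_mono r"
    unfolding strict_mono_Suc_iff
  proof
    fix k
    have "r (Suc k) \<ge> fst (st (Suc k))" using rprop by blast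
    thus "r k < r (Suc k)" by (simp add: stS)
  qed
  have zero: "x (r k) a = 0" if "j < k" "a \<in> FF j" for j k a
    using rprop[of k] inv[of k] that by auto
  define y where "y k = restr A (FF k) (x (r k))" for k
  have ycube: "y k \<in> cube A" for k
    unfolding y_def using cube_restr assms(2) FFp by blast
  have yge: "f (r k) (y k) \<ge> 1 - e k" for k
    using FFp[of k] assms(5)[of "r k"] unfolding y_def by (simp add: abs_le_iff)
  have disj: "(\<Sum>k<m. \<bar>y k a\<bar>) \<le> 1" if a: "a \<in> A" for m a
  proof (induction m)
    case 0 show ?case by simp
  next
    case (Suc m)
    show ?case
    proof (cases "y m a = 0")
      case True thus ?thesis using Suc by simp
    next
      case False
      have "y k a = 0" if "k < m" for k
      proof (cases "a \<in> FF k")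
        case True
        then have "x (r m) a = 0" using zero[OF that True] by simp
        hence "y m a = 0" unfolding y_def restr_def by simp
        with False show ?thesis by simp
      next
        case False thus ?thesis using a unfolding y_def restr_def by simp
      qed
      hence "(\<Sum>k<m. \<bar>y k a\<bar>) = 0" by simp
      moreover have "\<bar>y m a\<bar> \<le> 1" using cube_le1[OF ycube a] .
      ultimately show ?thesis by simp
    qed
  qed
  have esum_eq: "(\<Sum>k<m. e k) = \<epsilon> - \<epsilon> / 2 ^ m" for m
    by (induction m) (simp_all add: e_def field_simps)
  have esum: "(\<Sum>k<m. e k) \<le> \<epsilon>" for m
    unfolding esum_eq using ep by simp
  have gfns: "(\<lambda>t. \<Sum>k<m. f (r k) t) \<in> fin_norm_space A" for m
  proof (induction m)
    case 0 show ?case using zero_fns by simp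
  next
    case (Suc m)
    show ?case
    proof (rule fns_bound[OF Suc S[THEN conjunct1, of "r m"], of _ 1 1])
      show "\<forall>t. t \<notin> cube A \<longrightarrow> (\<Sum>k<Suc m. f (r k) t) = 0"
        using S unfolding fin_norm_space_def by simp
      show "\<forall>t\<in>cube A. \<bar>\<Sum>k<Suc m. f (r k) t\<bar> \<le> 1 * \<bar>\<Sum>k<m. f (r k) t\<bar> + 1 * \<bar>f (r m) t\<bar>"
        by (simp add: abs_triangle_ineq)
    qed auto
  qed
  show "\<exists>r. strict_mono r \<and> (\<forall>m. fbl_norm A (\<lambda>t. \<Sum>k<m. f (r k) t) \<ge> real m - \<epsilon>)"
  proof (intro exI conjI allI)
    show "strict_mono r" by (rule mono)
    fix m
    have "real m - \<epsilon> \<le> (\<Sum>i<m. (1 - e i))" using esum[of m] by (simp add: sum_subtractf)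
    also have "\<dots> \<le> (\<Sum>i<m. f (r i) (y i))" by (rule sum_mono) (use yge in auto)
    also have "\<dots> \<le> (\<Sum>i<m. \<bar>\<Sum>k<m. f (r k) (y i)\<bar>)"
    proof (rule sum_mono)
      fix i assume i: "i \<in> {..<m}"
      have "f (r i) (y i) \<le> (\<Sum>k<m. f (r k) (y i))"
        by (rule member_le_sum[of i "{..<m}" "\<lambda>k. f (r k) (y i)"]) (use i assms(4) ycube in auto)
      thus "f (r i) (y i) \<le> \<bar>\<Sum>k<m. f (r k) (y i)\<bar>" by linarith
    qed
    also have "\<dots> \<le> fbl_norm A (\<lambda>t. \<Sum>k<m. f (r k) t)"
      using norm_ge_sum[OF gfns[of m], of m y] ycube disj by auto
    finally show "fbl_norm A (\<lambda>t. \<Sum>k<m. f (r k) t) \<ge> real m - \<epsilon>" .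
  qed
qed

end
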